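(* For every integer $n\ge2$, $$F_{n-2}=\sum_{(a_1,\dots,a_k)\in C(n)}\Bigl\lfloor\frac{a_1-1}{2}\Bigr\rfloor\cdots\Bigl\lfloor\frac{a_k-1}{2}\Bigr\rfloor.$$
   Context: $C(n)$ is the set of all compositions $(a_1,\dots,a_k)$ of $n$ (sequences of positive integers with sum $n$, any number of parts). Fibonacci numbers: $F_0=0$, $F_1=1$, $F_n=F_{n-1}+F_{n-2}$. *)

theory Defs
  imports Main "HOL-Number_Theory.Fib"
begin

definition compositions :: "nat \<Rightarrow> nat list set" where
  "compositions n = {as. (\<forall>a\<in>set as. 0 < a) \<and> sum_list as = n}"

end

theory Submission
  imports Defs
begin

definition g :: "nat \<Rightarrow> int" where "g a = \<lfloor>(real a - 1) / 2\<rfloor>"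
definition S :: "nat \<Rightarrow> int" where "S n = (\<Sum>as\<in>compositions n. \<Prod>a\<leftarrow>as. g a)"

lemma g2: "g (a + 2) = g a + 1"
proof -
  have "(real (a+2) - 1)/2 = (real a - 1)/2 + 1" by (simp add: field_simps)
  hence "\<lfloor>(real (a+2) - 1)/2\<rfloor> = \<lfloor>(real a - 1)/2 + 1\<rfloor>" by (rule arg_cong)
  thus ?thesis unfolding g_def by (metis floor_add_int of_int_1)
qed

lemma g2': "g (Suc (Suc a)) = g a + 1" using g2[of a] by simp

lemma g_small: "g 1 = 0" "g 2 = 0" "g (Suc 0) = 0" "g (Suc (Suc 0)) = 0" by (simp_all add: g_def)

lemma comp_finite: "finite (compositions n)"
proof -
  have "compositions n \<subseteq> {xs. set xs \<subseteq> {..n} \<and> length xs \<le> n}"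
  proof
    fix xs assume "xs \<in> compositions n"
    hence p: "\<forall>a\<in>set xs. 0 < a" and s: "sum_list xs = n" by (auto simp: compositions_def)
    have "\<forall>a\<in>set xs. a \<le> n" using s member_le_sum_list by blast
    moreover have "length xs \<le> sum_list xs" using p by (induction xs) auto
    ultimately show "xs \<in> {xs. set xs \<subseteq> {..n} \<and> length xs \<le> n}" using s by auto
  qed
  moreover have "finite {xs. set xs \<subseteq> {..n} \<and> length xs \<le> n}"
    by (rule finite_lists_length_le) simp
  ultimately show ?thesis by (rule finite_subset)
qed

lemma comp0: "compositions 0 = {[]}"
  by (auto simp: compositions_def) (metis list.exhaust list.set_intros(1) not_gr0 sum_list_eq_0_iff)

lemma S0: "S 0 = 1" by (simp add: S_def comp0)

lemma comp_Suc: "compositions (Suc m) = (\<Union>a\<in>{1..Suc m}. (#) a ` compositions (Suc m - a))"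
proof
  show "compositions (Suc m) \<subseteq> (\<Union>a\<in>{1..Suc m}. (#) a ` compositions (Suc m - a))"
  proof
    fix xs assume h: "xs \<in> compositions (Suc m)"
    then obtain a ys where xs: "xs = a # ys" by (cases xs) (auto simp: compositions_def)
    with h have "a \<in> {1..Suc m}" "ys \<in> compositions (Suc m - a)"
      by (auto simp: compositions_def)
    thus "xs \<in> (\<Union>a\<in>{1..Suc m}. (#) a ` compositions (Suc m - a))"
      using xs by blast
  qed
qed (auto simp: compositions_def)

lemma S_rec: "S (Suc m) = (\<Sum>a\<in>{1..Suc m}. g a * S (Suc m - a))"
proof -
  have "S (Suc m) = (\<Sum>a\<in>{1..Suc m}. \<Sum>as\<in>(#) a ` compositions (Suc m - a). \<Prod>b\<leftarrow>as. g b)"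
    unfolding S_def comp_Suc
    by (rule sum.UNION_disjoint) (auto simp: comp_finite)
  also have "\<dots> = (\<Sum>a\<in>{1..Suc m}. g a * S (Suc m - a))"
    by (rule sum.cong) (auto simp: sum.reindex S_def sum_distrib_left)
  finally show ?thesis .
qed

lemma S1: "S 1 = 0" using S_rec[of 0] by (simp add: g_small S0)

lemma rev_sum: "(\<Sum>b\<in>{1..n}. S (n - b)) = (\<Sum>c<n. S c)"
  by (rule sum.reindex_bij_witness[where i="\<lambda>c. n - c" and j="\<lambda>b. n - b"]) auto

lemma key: assumes "n \<ge> 1" shows "S (n + 2) = S n + (\<Sum>c<n. S c)"
proof -
  have split: "{1..Suc (n+1)} = {1,2} \<union> (\<lambda>b. b + 2) ` {1..n}"
  proof (rule set_eqI, rule iffI)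
    fix x assume "x \<in> {1..Suc (n+1)}"
    thus "x \<in> {1,2} \<union> (\<lambda>b. b + 2) ` {1..n}"
    proof (cases "x \<le> 2")
      case False
      hence "x = (x - 2) + 2" "x - 2 \<in> {1..n}" using \<open>x \<in> {1..Suc (n+1)}\<close> by auto
      thus ?thesis by blast
    qed auto
  qed auto
  have "S (n+2) = (\<Sum>a\<in>{1..Suc (n+1)}. g a * S (Suc (n+1) - a))"
    using S_rec[of "n+1"] by simp
  also have "\<dots> = (\<Sum>a\<in>{1,2}. g a * S (Suc (n+1) - a)) + (\<Sum>a\<in>(\<lambda>b. b + 2) ` {1..n}. g a * S (Suc (n+1) - a))"
    unfolding split by (rule sum.union_disjoint) auto
  also have "(\<Sum>a\<in>{1,2}. g a * S (Suc (n+1) - a)) = 0" by (simp add: g_small)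
  also have "(\<Sum>a\<in>(\<lambda>b. b + 2) ` {1..n}. g a * S (Suc (n+1) - a)) = (\<Sum>b\<in>{1..n}. (g b + 1) * S (n - b))"
    by (subst sum.reindex) (auto simp: g2' inj_on_def)
  also have "\<dots> = (\<Sum>b\<in>{1..n}. g b * S (n - b)) + (\<Sum>b\<in>{1..n}. S (n - b))"
    by (simp add: distrib_right sum.distrib)
  also have "(\<Sum>b\<in>{1..n}. g b * S (n - b)) = S n"
    using S_rec[of "n - 1"] assms by simp
  finally show ?thesis using rev_sum[of n] by simp
qed

lemma S1': "S (Suc 0) = 0" using S1 by simp
lemma S3: "S 3 = 1" using key[of 1] by (simp add: S1' S0 numeral_3_eq_3)
lemma S2: "S 2 = 0" using S_rec[of 1] by (simp add: S1' S0 g_small numeral_2_eq_2)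
lemma S2': "S (Suc (Suc 0)) = 0" using S2 by (simp add: numeral_2_eq_2)
lemma S3': "S (Suc (Suc (Suc 0))) = 1" using S3 by (simp add: numeral_3_eq_3)

lemma claim: "S (n+2) = int (fib n) \<and> S (n+3) = int (fib (n+1)) \<and> (\<Sum>c<n+3. S c) = int (fib (n+2))"
proof (induction n)
  case 0
  then show ?case by (simp add: S0 S1' S2' S3' numeral_3_eq_3 numeral_2_eq_2)
next
  case (Suc n)
  hence IH: "S (n+2) = int (fib n)" "S (n+3) = int (fib (n+1))" "(\<Sum>c<n+3. S c) = int (fib (n+2))" by auto
  have P2: "(\<Sum>c<n+2. S c) = int (fib (n+1))"
  proof -
    have "(\<Sum>c<n+3. S c) = (\<Sum>c<n+2. S c) + S (n+2)" by (simp add: numeral_3_eq_3 numeral_2_eq_2)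
    thus ?thesis using IH by (simp add: numeral_eq_Suc)
  qed
  have "S (n+4) = S (n+2) + (\<Sum>c<n+2. S c)" using key[of "n+2"] by (simp add: numeral_eq_Suc)
  hence A: "S (Suc n + 3) = int (fib (Suc n + 1))" using IH P2 by (simp add: numeral_eq_Suc)
  have "(\<Sum>c<Suc n+3. S c) = (\<Sum>c<n+3. S c) + S (n+3)" by (simp add: numeral_eq_Suc)
  hence B: "(\<Sum>c<Suc n+3. S c) = int (fib (Suc n + 2))" using IH by (simp add: numeral_eq_Suc)
  show ?case using A B IH by (simp add: numeral_eq_Suc)
qed

theorem mainTheorem15:
  fixes n :: nat
  assumes "n \<ge> 2"
  shows "int (fib (n - 2)) =
    (\<Sum>as\<in>compositions n. \<Prod>a\<leftarrow>as. \<lfloor>(real a - 1) / 2\<rfloor>)"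
proof -
  have "(\<Sum>as\<in>compositions n. \<Prod>a\<leftarrow>as. \<lfloor>(real a - 1) / 2\<rfloor>) = S n"
    by (simp add: S_def g_def)
  moreover obtain m where m: "n = m + 2" using assms le_Suc_ex by (metis add.commute)
  moreover have "S n = int (fib (n - 2))" using claim[of m] m by simp
  ultimately show ?thesis by simp
qed

end
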